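(* Let $n\ge1$ and let $\lambda$ be a partition of $n$. The state-space complexity of $\mathcal{L}(\lambda)$ is at most $n+1$ and that of $\mathcal{D}(\lambda)$ is at most $n$ (both attained for $\lambda=(n)$). Moreover there is an absolute constant $C>0$ such that the state-space complexity of each of $\mathcal{L}(\lambda)$ and $\mathcal{D}(\lambda)$ is at least $C\sqrt{n}$.
   Context: A partition of $n$ is a non-increasing sequence $\lambda=(\lambda_1,\dots,\lambda_r)$ of positive integers with sum $n$; $()$ is the empty partition. For non-negative $i,j$, $\lambda[i,j]$ is $(\lambda_{i+1}-j,\dots,\lambda_r-j)$ with all non-positive entries removed. LCTR: positions $\mathcal{L}(\mu)$; if $\mu\neq()$ the two moves go to $\mathcal{L}(\mu[1,0])$ and $\mathcal{L}(\mu[0,1])$; $\mathcal{L}(())$ is terminal. Downright: positions $\mathcal{D}(\mu)$, $\mu$ nonempty with $s$ parts; a move to $\mathcal{D}(\mu[1,0])$ exists iff $s>1$, a move to $\mathcal{D}(\mu[0,1])$ exists iff $\mu_1>1$. The game tree of a position $p$ is the rooted tree with root $p$ in which each move gives a child, the root of the game tree of the resulting position. Two positions are called distinct if their game trees are not isomorphic as rooted trees. The state-space complexity of a game started at $p$ is the number of pairwise distinct positions reachable from $p$ by zero or more moves. *)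

theory Defs
  imports Complex_Main "HOL-Library.Multiset"
begin

definition is_partition :: "nat list \<Rightarrow> nat \<Rightarrow> bool" where
  "is_partition lam n \<longleftrightarrow> sorted_wrt (\<ge>) lam \<and> (\<forall>x\<in>set lam. 0 < x) \<and> sum_list lam = n"

text \<open>lam[i,j] = (lam_{i+1}-j, ..., lam_r - j) with non-positive entries removed.\<close>
definition shift :: "nat list \<Rightarrow> nat \<Rightarrow> nat \<Rightarrow> nat list" where
  "shift lam i j = filter (\<lambda>x. 0 < x) (map (\<lambda>x. x - j) (drop i lam))"

text \<open>Rooted unordered trees, up to isomorphism: children form a multiset.
  Two rooted trees are isomorphic iff their representations are equal.\<close>
datatype gtree = GNode "gtree multiset"

lemma shift_measure_10: "lam \<noteq> [] \<Longrightarrow> sum_list (shift lam 1 0) + length (shift lam 1 0) < sum_list lam + length lam"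
proof -
  have aux: "sum_list (filter (\<lambda>x. 0 < x) xs) + length (filter (\<lambda>x. 0 < (x::nat)) xs)
      \<le> sum_list xs + length xs" for xs :: "nat list"
    by (induction xs) auto
  assume "lam \<noteq> []"
  then obtain a xs where "lam = a # xs" by (cases lam) auto
  with aux[of xs] show ?thesis by (simp add: shift_def)
qed

lemma shift_measure_01: "lam \<noteq> [] \<Longrightarrow> sum_list (shift lam 0 1) + length (shift lam 0 1) < sum_list lam + length lam"
proof -
  have aux: "sum_list (filter (\<lambda>x. 0 < x) (map (\<lambda>x. x - 1) xs)) + length (filter (\<lambda>x. 0 < (x::nat)) (map (\<lambda>x. x - 1) xs))
      + length xs \<le> sum_list xs + length xs" for xs :: "nat list"
    by (induction xs) auto
  assume "lam \<noteq> []"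
  then obtain a xs where "lam = a # xs" by (cases lam) auto
  with aux[of xs] show ?thesis by (simp add: shift_def)
qed

function lctr_tree :: "nat list \<Rightarrow> gtree" where
  "lctr_tree lam = (if lam = [] then GNode {#}
     else GNode {# lctr_tree (shift lam 1 0), lctr_tree (shift lam 0 1) #})"
  by auto
termination
proof (relation "measure (\<lambda>lam. sum_list lam + length lam)")
  show "wf (measure (\<lambda>lam. sum_list lam + length lam))" by simp
qed (use shift_measure_10 shift_measure_01 in \<open>simp_all only: in_measure\<close>, (metis list.size(3) not_less0 shift_measure_10 shift_measure_01)+)

function dr_tree :: "nat list \<Rightarrow> gtree" where
  "dr_tree lam = GNode (
     (if 1 < length lam then {# dr_tree (shift lam 1 0) #} else {#}) +
     (if lam \<noteq> [] \<and> 1 < hd lam then {# dr_tree (shift lam 0 1) #} else {#}))"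
  by auto
termination
proof (relation "measure (\<lambda>lam. sum_list lam + length lam)")
  show "wf (measure (\<lambda>lam. sum_list lam + length lam))" by simp
qed (use shift_measure_10 shift_measure_01 in \<open>simp_all only: in_measure\<close>, (metis list.size(3) not_less0 shift_measure_10 shift_measure_01)+)

inductive_set lctr_reach :: "nat list \<Rightarrow> nat list set" for lam where
  refl: "lam \<in> lctr_reach lam"
| mv1: "mu \<in> lctr_reach lam \<Longrightarrow> mu \<noteq> [] \<Longrightarrow> shift mu 1 0 \<in> lctr_reach lam"
| mv2: "mu \<in> lctr_reach lam \<Longrightarrow> mu \<noteq> [] \<Longrightarrow> shift mu 0 1 \<in> lctr_reach lam"

inductive_set dr_reach :: "nat list \<Rightarrow> nat list set" for lam where
  refl: "lam \<in> dr_reach lam"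
| mv1: "mu \<in> dr_reach lam \<Longrightarrow> 1 < length mu \<Longrightarrow> shift mu 1 0 \<in> dr_reach lam"
| mv2: "mu \<in> dr_reach lam \<Longrightarrow> mu \<noteq> [] \<Longrightarrow> 1 < hd mu \<Longrightarrow> shift mu 0 1 \<in> dr_reach lam"

text \<open>State-space complexity: number of pairwise distinct (non-isomorphic game trees) reachable positions.\<close>
definition lctr_ssc :: "nat list \<Rightarrow> nat" where
  "lctr_ssc lam = card (lctr_tree ` lctr_reach lam)"

definition dr_ssc :: "nat list \<Rightarrow> nat" where
  "dr_ssc lam = card (dr_tree ` dr_reach lam)"

end

theory Submission
  imports Defs
begin

lemma shift_pos: "x \<in> set (shift xs i j) \<Longrightarrow> 0 < x"
  by (simp add: shift_def)

lemma shift_allpos: "\<forall>x\<in>set xs. 0 < x \<Longrightarrow> shift xs i 0 = drop i xs"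
  unfolding shift_def by (auto simp: filter_id_conv dest: in_set_dropD)

lemma shift_shift_01: "shift (shift xs i j) 0 1 = shift xs i (Suc j)"
proof -
  have "filter (\<lambda>x. 0 < x) (map (\<lambda>x. x - 1) (filter (\<lambda>x. 0 < x) (map (\<lambda>x. x - j) zs)))
     = filter (\<lambda>x. 0 < x) (map (\<lambda>x. x - Suc j) zs)" for zs :: "nat list"
    by (induction zs) auto
  thus ?thesis by (simp add: shift_def)
qed

lemma drop1_filter:
  assumes "sorted_wrt (\<ge>) (ys::nat list)"
  shows "drop 1 (filter (\<lambda>x. 0<x) (map (\<lambda>x. x - j) ys)) = filter (\<lambda>x. 0<x) (map (\<lambda>x. x-j) (drop 1 ys))"
proof (cases ys)
  case Nil then show ?thesis by simp
next
  case (Cons a t)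
  show ?thesis
  proof (cases "j < a")
    case True then show ?thesis using Cons by simp
  next
    case False
    then have "\<forall>y\<in>set t. y \<le> j" using assms Cons by auto
    then have "filter (\<lambda>x. 0<x) (map (\<lambda>x. x-j) t) = []" by (auto simp: filter_empty_conv)
    then show ?thesis using Cons False by simp
  qed
qed

lemma shift_shift_10:
  assumes "sorted_wrt (\<ge>) (xs::nat list)"
  shows "shift (shift xs i j) 1 0 = shift xs (Suc i) j"
proof -
  have s: "sorted_wrt (\<ge>) (drop i xs)" using assms by (simp add: sorted_wrt_drop)
  have "shift (shift xs i j) 1 0 = drop 1 (shift xs i j)"
    by (rule shift_allpos) (simp add: shift_pos)
  also have "\<dots> = shift xs (Suc i) j"
    unfolding shift_def using drop1_filter[OF s, of j] by simp
  finally show ?thesis .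
qed

lemma shift_nonempty_cell:
  assumes "sorted_wrt (\<ge>) (xs::nat list)" "shift xs i j \<noteq> []"
  shows "i < length xs \<and> j < xs ! i"
proof -
  obtain x where x: "x \<in> set (drop i xs)" "j < x"
    using assms(2) by (auto simp: shift_def filter_empty_conv)
  then obtain k where k: "k < length xs - i" "x = drop i xs ! k" by (auto simp: in_set_conv_nth)
  then have "x = xs ! (i + k)" by simp
  moreover have "xs ! (i+k) \<le> xs ! i" using assms(1) k
    by (cases k) (auto simp: sorted_wrt_iff_nth_less)
  ultimately show ?thesis using k x by auto
qed

lemma card_cells: "card {(i,j). i < length xs \<and> j < (xs::nat list) ! i} = sum_list xs"
proof -
  have "{(i,j). i < length xs \<and> j < xs ! i} = Sigma {..<length xs} (\<lambda>i. {..<xs!i})" by auto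
  then show ?thesis by (simp add: sum_list_sum_nth atLeast0LessThan)
qed

lemma shift01_ne: "mu \<noteq> [] \<Longrightarrow> 1 < hd mu \<Longrightarrow> shift mu 0 1 \<noteq> []"
  by (cases mu) (auto simp: shift_def)

lemma shift_00: "\<forall>x\<in>set xs. 0 < x \<Longrightarrow> shift xs 0 0 = xs"
  using shift_allpos[of xs 0] by simp

lemma lctr_reach_shift:
  assumes "sorted_wrt (\<ge>) lam" "\<forall>x\<in>set lam. 0 < x"
  shows "mu \<in> lctr_reach lam \<Longrightarrow> \<exists>i j. mu = shift lam i j"
proof (induction rule: lctr_reach.induct)
  case refl then show ?case using shift_00[OF assms(2)] by metis
next
  case (mv1 mu) then show ?case using shift_shift_10[OF assms(1)] by metis
next
  case (mv2 mu) then show ?case using shift_shift_01 by metis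
qed

lemma dr_reach_shift:
  assumes "sorted_wrt (\<ge>) lam" "\<forall>x\<in>set lam. 0 < x" "lam \<noteq> []"
  shows "mu \<in> dr_reach lam \<Longrightarrow> (\<exists>i j. mu = shift lam i j) \<and> mu \<noteq> []"
proof (induction rule: dr_reach.induct)
  case refl then show ?case using shift_00[OF assms(2)] assms(3) by metis
next
  case (mv1 mu)
  then obtain i j where e: "mu = shift lam i j" by blast
  have "shift mu 1 0 = drop 1 mu" by (rule shift_allpos) (simp add: e shift_pos)
  then have "shift mu 1 0 \<noteq> []" using mv1 by simp
  then show ?case using e shift_shift_10[OF assms(1)] by metis
next
  case (mv2 mu)
  then obtain i j where e: "mu = shift lam i j" by blast
  have "shift mu 0 1 \<noteq> []" using mv2 shift01_ne by blast
  then show ?case using e shift_shift_01 by metis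
qed

lemma finite_cells: "finite {(i,j). i < length xs \<and> j < (xs::nat list) ! i}"
proof -
  have "{(i,j). i < length xs \<and> j < xs ! i} \<subseteq> {..<length xs} \<times> {..<Max (insert 0 (set xs))}"
    by (auto simp: less_le_trans[OF _ Max_ge])
  then show ?thesis by (rule finite_subset) auto
qed

lemma lctr_upper:
  assumes "is_partition lam n"
  shows "lctr_ssc lam \<le> n + 1" "finite (lctr_tree ` lctr_reach lam)"
proof -
  let ?C = "{(i,j). i < length lam \<and> j < lam ! i}"
  have s: "sorted_wrt (\<ge>) lam" and p: "\<forall>x\<in>set lam. 0 < x" and n: "sum_list lam = n"
    using assms by (auto simp: is_partition_def)
  have sub: "lctr_reach lam \<subseteq> insert [] ((\<lambda>(i,j). shift lam i j) ` ?C)"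
  proof
    fix mu assume "mu \<in> lctr_reach lam"
    then obtain i j where e: "mu = shift lam i j" using lctr_reach_shift[OF s p] by blast
    show "mu \<in> insert [] ((\<lambda>(i,j). shift lam i j) ` ?C)"
    proof (cases "mu = []")
      case False
      then have "(i,j) \<in> ?C" using shift_nonempty_cell[OF s] e by auto
      then show ?thesis using e by force
    qed simp
  qed
  have fin: "finite (insert [] ((\<lambda>(i,j). shift lam i j) ` ?C))" using finite_cells by simp
  have "lctr_ssc lam \<le> card (lctr_reach lam)"
    unfolding lctr_ssc_def using finite_subset[OF sub fin] by (rule card_image_le)
  also have "\<dots> \<le> card (insert [] ((\<lambda>(i,j). shift lam i j) ` ?C))" by (rule card_mono[OF fin sub])
  also have "\<dots> \<le> Suc (card ((\<lambda>(i,j). shift lam i j) ` ?C))" by (rule card_insert_le_m1) simp_all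
  also have "\<dots> \<le> Suc (card ?C)" using card_image_le[OF finite_cells] by simp
  finally show "lctr_ssc lam \<le> n + 1" using card_cells[of lam] n by simp
  show "finite (lctr_tree ` lctr_reach lam)" using finite_subset[OF sub fin] by simp
qed

lemma dr_upper:
  assumes "is_partition lam n" "1 \<le> n"
  shows "dr_ssc lam \<le> n" "finite (dr_tree ` dr_reach lam)"
proof -
  let ?C = "{(i,j). i < length lam \<and> j < lam ! i}"
  have s: "sorted_wrt (\<ge>) lam" and p: "\<forall>x\<in>set lam. 0 < x" and n: "sum_list lam = n"
    using assms by (auto simp: is_partition_def)
  have ne: "lam \<noteq> []" using n assms(2) by auto
  have sub: "dr_reach lam \<subseteq> (\<lambda>(i,j). shift lam i j) ` ?C"
  proof
    fix mu assume "mu \<in> dr_reach lam"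
    then obtain i j where e: "mu = shift lam i j" and "mu \<noteq> []" using dr_reach_shift[OF s p ne] by blast
    then have "(i,j) \<in> ?C" using shift_nonempty_cell[OF s] e by auto
    then show "mu \<in> (\<lambda>(i,j). shift lam i j) ` ?C" using e by force
  qed
  have fin: "finite ((\<lambda>(i,j). shift lam i j) ` ?C)" using finite_cells by simp
  have "dr_ssc lam \<le> card (dr_reach lam)"
    unfolding dr_ssc_def using finite_subset[OF sub fin] by (rule card_image_le)
  also have "\<dots> \<le> card ((\<lambda>(i,j). shift lam i j) ` ?C)" by (rule card_mono[OF fin sub])
  also have "\<dots> \<le> card ?C" using card_image_le[OF finite_cells] by simp
  finally show "dr_ssc lam \<le> n" using card_cells[of lam] n by simp
  show "finite (dr_tree ` dr_reach lam)" using finite_subset[OF sub fin] by simp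
qed


lemma lctr_size_dec: "mu \<noteq> [] \<Longrightarrow> size (lctr_tree (shift mu 1 0)) < size (lctr_tree mu) \<and> size (lctr_tree (shift mu 0 1)) < size (lctr_tree mu)"
proof -
  assume a: "mu \<noteq> []"
  have e: "lctr_tree mu = GNode {# lctr_tree (shift mu 1 0), lctr_tree (shift mu 0 1) #}"
    using lctr_tree.simps[of mu] a by (simp del: lctr_tree.simps)
  show ?thesis unfolding e by simp
qed

lemma dr_size_dec1: "1 < length mu \<Longrightarrow> size (dr_tree (shift mu 1 0)) < size (dr_tree mu)"
proof -
  assume a: "1 < length mu"
  obtain X where e: "dr_tree mu = GNode ({# dr_tree (shift mu 1 0) #} + X)"
    using dr_tree.simps[of mu] a by (simp del: dr_tree.simps)
  show ?thesis unfolding e by (simp add: size_multiset_union)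
qed

lemma dr_size_dec2: "mu \<noteq> [] \<Longrightarrow> 1 < hd mu \<Longrightarrow> size (dr_tree (shift mu 0 1)) < size (dr_tree mu)"
proof -
  assume a: "mu \<noteq> []" "1 < hd mu"
  obtain X where e: "dr_tree mu = GNode (X + {# dr_tree (shift mu 0 1) #})"
    using dr_tree.simps[of mu] a by (simp del: dr_tree.simps)
  show ?thesis unfolding e by (simp add: size_multiset_union)
qed

lemma dec_chain: "(\<forall>k<L. h (Suc k) < (h k ::nat)) \<Longrightarrow> k < m \<Longrightarrow> m \<le> L \<Longrightarrow> h m < h k"
proof (induction m)
  case (Suc m)
  have "h (Suc m) < h m" using Suc.prems by auto
  moreover have "k = m \<or> h m < h k" using Suc by (cases "k = m") auto
  ultimately show ?case by auto
qed simp

lemma chain_card: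
  assumes "\<forall>k\<le>L. p k \<in> R" "\<forall>k<L. size (T (p (Suc k))) < size ((T::'a \<Rightarrow> gtree) (p k))"
    "finite (T ` R)"
  shows "Suc L \<le> card (T ` R)"
proof -
  have inj: "inj_on (T \<circ> p) {..L}"
  proof (rule inj_onI)
    fix a b assume ab: "a \<in> {..L}" "b \<in> {..L}" "(T \<circ> p) a = (T \<circ> p) b"
    show "a = b"
    proof (rule ccontr)
      assume "a \<noteq> b"
      then consider "a < b" | "b < a" by linarith
      then show False
      proof cases
        case 1 then show False
          using dec_chain[of L "\<lambda>k. size (T (p k))", OF assms(2), of a b] ab by simp
      next
        case 2 then show False
          using dec_chain[of L "\<lambda>k. size (T (p k))", OF assms(2), of b a] ab by simp
      qed
    qed
  qed
  have "(T \<circ> p) ` {..L} \<subseteq> T ` R" using assms(1) by auto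
  then have "card ((T \<circ> p) ` {..L}) \<le> card (T ` R)" using assms(3) by (rule card_mono[rotated])
  then show ?thesis using card_image[OF inj] by simp
qed

lemma hd_shift0: "xs \<noteq> [] \<Longrightarrow> j < hd xs \<Longrightarrow> shift xs 0 j \<noteq> [] \<and> hd (shift xs 0 j) = hd xs - j"
  by (cases xs) (auto simp: shift_def)

lemma lctr_lower:
  assumes "is_partition lam n" "1 \<le> n"
  shows "length lam + 1 \<le> lctr_ssc lam \<and> hd lam + 1 \<le> lctr_ssc lam"
proof -
  have s: "sorted_wrt (\<ge>) lam" and p: "\<forall>x\<in>set lam. 0 < x" and n: "sum_list lam = n"
    using assms by (auto simp: is_partition_def)
  have ne: "lam \<noteq> []" using n assms(2) by auto
  have fin: "finite (lctr_tree ` lctr_reach lam)" using lctr_upper[OF assms(1)] by simp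
  have dp: "\<forall>x\<in>set (drop k lam). 0 < x" for k using p by (auto dest: in_set_dropD)
  have r1: "k \<le> length lam \<longrightarrow> drop k lam \<in> lctr_reach lam" for k
  proof (induction k)
    case 0 then show ?case by (simp add: lctr_reach.refl)
  next
    case (Suc k)
    have "drop (Suc k) lam = shift (drop k lam) 1 0" using shift_allpos[OF dp[of k], of 1] by simp
    then show ?case using Suc lctr_reach.mv1[of "drop k lam" lam] by simp
  qed
  have A: "Suc (length lam) \<le> lctr_ssc lam" unfolding lctr_ssc_def
  proof (rule chain_card[where p = "\<lambda>k. drop k lam"])
    show "\<forall>k\<le>length lam. drop k lam \<in> lctr_reach lam" using r1 by blast
    show "\<forall>k<length lam. size (lctr_tree (drop (Suc k) lam)) < size (lctr_tree (drop k lam))"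
    proof (intro allI impI)
      fix k assume "k < length lam"
      then have "drop k lam \<noteq> []" by simp
      moreover have "drop (Suc k) lam = shift (drop k lam) 1 0" using shift_allpos[OF dp[of k], of 1] by simp
      ultimately show "size (lctr_tree (drop (Suc k) lam)) < size (lctr_tree (drop k lam))"
        using lctr_size_dec by metis
    qed
  qed (rule fin)
  have c1: "j \<le> hd lam \<longrightarrow> shift lam 0 j \<in> lctr_reach lam" for j
  proof (induction j)
    case 0 then show ?case using shift_00[OF p] lctr_reach.refl by metis
  next
    case (Suc j)
    then show ?case using lctr_reach.mv2[of "shift lam 0 j" lam] hd_shift0[OF ne, of j] shift_shift_01 by auto
  qed
  have B: "Suc (hd lam) \<le> lctr_ssc lam" unfolding lctr_ssc_def
  proof (rule chain_card[where p = "\<lambda>j. shift lam 0 j"])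
    show "\<forall>k\<le>hd lam. shift lam 0 k \<in> lctr_reach lam" using c1 by blast
    show "\<forall>k<hd lam. size (lctr_tree (shift lam 0 (Suc k))) < size (lctr_tree (shift lam 0 k))"
      using lctr_size_dec hd_shift0[OF ne] shift_shift_01 by metis
  qed (rule fin)
  show ?thesis using A B by simp
qed

lemma dr_lower:
  assumes "is_partition lam n" "1 \<le> n"
  shows "length lam \<le> dr_ssc lam \<and> hd lam \<le> dr_ssc lam"
proof -
  have s: "sorted_wrt (\<ge>) lam" and p: "\<forall>x\<in>set lam. 0 < x" and n: "sum_list lam = n"
    using assms by (auto simp: is_partition_def)
  have ne: "lam \<noteq> []" using n assms(2) by auto
  have fin: "finite (dr_tree ` dr_reach lam)" using dr_upper[OF assms] by simp
  have dp: "\<forall>x\<in>set (drop k lam). 0 < x" for k using p by (auto dest: in_set_dropD)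
  have r1: "k \<le> length lam - 1 \<longrightarrow> drop k lam \<in> dr_reach lam" for k
  proof (induction k)
    case 0 then show ?case by (simp add: dr_reach.refl)
  next
    case (Suc k)
    have "drop (Suc k) lam = shift (drop k lam) 1 0" using shift_allpos[OF dp[of k], of 1] by simp
    then show ?case using Suc dr_reach.mv1[of "drop k lam" lam] by simp
  qed
  have A: "Suc (length lam - 1) \<le> dr_ssc lam" unfolding dr_ssc_def
  proof (rule chain_card[where p = "\<lambda>k. drop k lam"])
    show "\<forall>k\<le>length lam - 1. drop k lam \<in> dr_reach lam" using r1 by blast
    show "\<forall>k<length lam - 1. size (dr_tree (drop (Suc k) lam)) < size (dr_tree (drop k lam))"
    proof (intro allI impI)
      fix k assume "k < length lam - 1"
      then have "1 < length (drop k lam)" by simp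
      moreover have "drop (Suc k) lam = shift (drop k lam) 1 0" using shift_allpos[OF dp[of k], of 1] by simp
      ultimately show "size (dr_tree (drop (Suc k) lam)) < size (dr_tree (drop k lam))"
        using dr_size_dec1 by metis
    qed
  qed (rule fin)
  have c1: "j \<le> hd lam - 1 \<longrightarrow> shift lam 0 j \<in> dr_reach lam" for j
  proof (induction j)
    case 0 then show ?case using shift_00[OF p] dr_reach.refl by metis
  next
    case (Suc j)
    then show ?case using dr_reach.mv2[of "shift lam 0 j" lam] hd_shift0[OF ne, of j] shift_shift_01 by auto
  qed
  have B: "Suc (hd lam - 1) \<le> dr_ssc lam" unfolding dr_ssc_def
  proof (rule chain_card[where p = "\<lambda>j. shift lam 0 j"])
    show "\<forall>k\<le>hd lam - 1. shift lam 0 k \<in> dr_reach lam" using c1 by blast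
    show "\<forall>k<hd lam - 1. size (dr_tree (shift lam 0 (Suc k))) < size (dr_tree (shift lam 0 k))"
    proof (intro allI impI)
      fix k assume k: "k < hd lam - 1"
      then have "shift lam 0 k \<noteq> [] \<and> 1 < hd (shift lam 0 k)" using hd_shift0[OF ne, of k] by auto
      then show "size (dr_tree (shift lam 0 (Suc k))) < size (dr_tree (shift lam 0 k))"
        using dr_size_dec2 shift_shift_01 by metis
    qed
  qed (rule fin)
  show ?thesis using A B ne p by (cases lam) auto
qed


lemma sum_le_len_hd: "sorted_wrt (\<ge>) (lam::nat list) \<Longrightarrow> sum_list lam \<le> length lam * hd lam"
proof (cases lam)
  case (Cons a t)
  assume s: "sorted_wrt (\<ge>) lam"
  have aux: "\<forall>x\<in>set u. x \<le> a \<Longrightarrow> sum_list u \<le> length u * a" for u :: "nat list"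
    by (induction u) auto
  have "sum_list t \<le> length t * a" using s Cons by (intro aux) auto
  then show ?thesis using Cons by simp
qed simp

lemma sqrt_bound:
  assumes "is_partition lam n"
  shows "sqrt (real n) \<le> real (max (length lam) (hd lam))"
proof -
  let ?m = "max (length lam) (hd lam)"
  have "n \<le> length lam * hd lam" using assms sum_le_len_hd by (auto simp: is_partition_def)
  also have "\<dots> \<le> ?m * ?m" by (intro mult_mono) auto
  finally have "real n \<le> real ?m * real ?m" by (simp flip: of_nat_mult)
  then have "sqrt (real n) \<le> sqrt (real ?m * real ?m)" by (rule real_sqrt_le_mono)
  then show ?thesis by simp
qed

theorem mainTheorem20:
  shows "(\<forall>n lam. 1 \<le> n \<longrightarrow> is_partition lam n \<longrightarrow>
            lctr_ssc lam \<le> n + 1 \<and> dr_ssc lam \<le> n)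
       \<and> (\<forall>n. 1 \<le> n \<longrightarrow> lctr_ssc [n] = n + 1 \<and> dr_ssc [n] = n)
       \<and> (\<exists>C::real. C > 0 \<and> (\<forall>n lam. 1 \<le> n \<longrightarrow> is_partition lam n \<longrightarrow>
            C * sqrt (real n) \<le> real (lctr_ssc lam) \<and> C * sqrt (real n) \<le> real (dr_ssc lam)))"
proof (intro conjI allI impI)
  fix n lam assume "1 \<le> n" "is_partition lam n"
  then show "lctr_ssc lam \<le> n + 1" "dr_ssc lam \<le> n" using lctr_upper dr_upper by auto
next
  fix n :: nat assume n: "1 \<le> n"
  have p: "is_partition [n] n" using n by (simp add: is_partition_def)
  show "lctr_ssc [n] = n + 1" using lctr_upper(1)[OF p] lctr_lower[OF p n] by simp
  show "dr_ssc [n] = n" using dr_upper(1)[OF p n] dr_lower[OF p n] by simp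
next
  show "\<exists>C::real. C > 0 \<and> (\<forall>n lam. 1 \<le> n \<longrightarrow> is_partition lam n \<longrightarrow>
            C * sqrt (real n) \<le> real (lctr_ssc lam) \<and> C * sqrt (real n) \<le> real (dr_ssc lam))"
  proof (intro exI[of _ 1] conjI allI impI)
    fix n lam assume n: "1 \<le> n" and p: "is_partition lam n"
    have b: "sqrt (real n) \<le> real (max (length lam) (hd lam))" by (rule sqrt_bound[OF p])
    have "max (length lam) (hd lam) \<le> lctr_ssc lam" using lctr_lower[OF p n] by simp
    then have "real (max (length lam) (hd lam)) \<le> real (lctr_ssc lam)" by (simp only: of_nat_le_iff)
    then show "1 * sqrt (real n) \<le> real (lctr_ssc lam)" using b by linarith
    have "max (length lam) (hd lam) \<le> dr_ssc lam" using dr_lower[OF p n] by simp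
    then have "real (max (length lam) (hd lam)) \<le> real (dr_ssc lam)" by (simp only: of_nat_le_iff)
    then show "1 * sqrt (real n) \<le> real (dr_ssc lam)" using b by linarith
  qed simp
qed

end
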